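(* For each $w>0$ there exists a unique probability density $p$ on $[0,\infty)$ with $\int_0^\infty x\,p(x)\,dx=w$ satisfying $T[p]=p$, and it is given by $$p_w(x)=\frac{4}{w^2}\,x\,e^{-\frac{2}{w}x},\qquad x\ge 0.$$
   Context: Let $\mathcal{P}$ denote the set of probability densities on $[0,\infty)$. For $p\in\mathcal{P}$ define $S[p](x)=\int_x^\infty \frac{p(u)}{u}\,du$ for $x\ge 0$, and define the nonlinear operator $T:\mathcal{P}\to\mathcal{P}$ by $T[p]=S[p]*S[p]$, i.e. $T[p](x)=\int_0^x S[p](x-v)\,S[p](v)\,dv$. (This is the infinite-population Immediate Exchange model: $p_{t+1}=T[p_t]$ is the density of $\epsilon_1U+\epsilon_2V$ where $U,V$ have density $p_t$, $\epsilon_1,\epsilon_2\sim \mathrm{Uniform}([0,1])$, all independent.) An equilibrium distribution is a $p\in\mathcal{P}$ with $T[p]=p$. *)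

theory Defs
  imports "HOL-Analysis.Analysis"
begin

definition is_density :: "(real \<Rightarrow> real) \<Rightarrow> bool" where
  "is_density p \<longleftrightarrow> (\<forall>x\<ge>0. 0 \<le> p x) \<and> set_integrable lborel {0..} p
     \<and> (LINT x:{0..}|lborel. p x) = 1"

definition S_op :: "(real \<Rightarrow> real) \<Rightarrow> real \<Rightarrow> real" where
  "S_op p x = (LINT u:{x<..}|lborel. p u / u)"

definition T_op :: "(real \<Rightarrow> real) \<Rightarrow> real \<Rightarrow> real" where
  "T_op p x = (LINT v:{0..x}|lborel. S_op p (x - v) * S_op p v)"

text \<open>Densities are identified up to Lebesgue-null sets, so T[p] = p means a.e. on [0,oo).\<close>
definition is_equilibrium :: "(real \<Rightarrow> real) \<Rightarrow> bool" where
  "is_equilibrium p \<longleftrightarrow> is_density p \<and> (AE x in lborel. x \<ge> 0 \<longrightarrow> T_op p x = p x)"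

definition has_mean :: "(real \<Rightarrow> real) \<Rightarrow> real \<Rightarrow> bool" where
  "has_mean p w \<longleftrightarrow> set_integrable lborel {0..} (\<lambda>x. x * p x)
     \<and> (LINT x:{0..}|lborel. x * p x) = w"

definition p_eq :: "real \<Rightarrow> real \<Rightarrow> real" where
  "p_eq w x = 4 / w^2 * x * exp (- (2 / w) * x)"

end

theory Submission
  imports Defs "HOL-Probability.Probability"
begin


lemma p_eq_erlang: "x \<ge> 0 \<Longrightarrow> p_eq w x = erlang_density 1 (2/w) x"
  by (simp add: p_eq_def erlang_density_def power2_eq_square field_simps)

lemma erlang_moment_int:
  assumes w: "w > 0"
  shows "integrable lborel (\<lambda>x. erlang_density 1 (2/w) x * x ^ i)"
    "integral\<^sup>L lborel (\<lambda>x. erlang_density 1 (2/w) x * x ^ i) = fact (1 + i) / (2/w) ^ i"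
proof -
  have l: "0 < 2/w" using w by simp
  have nn: "\<And>x. 0 \<le> erlang_density 1 (2/w) x * x ^ i"
    using l by (auto simp: erlang_density_def)
  have e: "(\<integral>\<^sup>+ x. ennreal (erlang_density 1 (2/w) x * x ^ i) \<partial>lborel) = ennreal (fact (1 + i) / (2/w) ^ i)"
    using nn_integral_erlang_ith_moment[OF l, of 1 i] by simp
  have m: "(\<lambda>x. erlang_density 1 (2/w) x * x ^ i) \<in> borel_measurable lborel" by simp
  have c: "0 \<le> fact (1 + i) / (2/w) ^ i" using l by simp
  have "integrable lborel (\<lambda>x. erlang_density 1 (2/w) x * x ^ i) \<and>
    integral\<^sup>L lborel (\<lambda>x. erlang_density 1 (2/w) x * x ^ i) = fact (1 + i) / (2/w) ^ i"
    using nn_integral_eq_integrable[OF m _ c] e nn by simp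
  then show "integrable lborel (\<lambda>x. erlang_density 1 (2/w) x * x ^ i)"
    "integral\<^sup>L lborel (\<lambda>x. erlang_density 1 (2/w) x * x ^ i) = fact (1 + i) / (2/w) ^ i" by auto
qed

lemma p_eq_ind: "w > 0 \<Longrightarrow> indicator {0..} x * p_eq w x = erlang_density 1 (2/w) x"
  by (auto simp: p_eq_erlang indicator_def erlang_density_def)

lemma p_eq_density: assumes w: "w > 0" shows "is_density (p_eq w)"
proof -
  have "set_integrable lborel {0..} (p_eq w)"
    unfolding set_integrable_def using erlang_moment_int(1)[OF w, of 0] p_eq_ind[OF w] by simp
  moreover have "(LINT x:{0..}|lborel. p_eq w x) = 1"
    unfolding set_lebesgue_integral_def using erlang_moment_int(2)[OF w, of 0] p_eq_ind[OF w] by simp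
  moreover have "\<forall>x\<ge>0. 0 \<le> p_eq w x" using w by (simp add: p_eq_def)
  ultimately show ?thesis unfolding is_density_def by blast
qed

lemma p_eq_mean: assumes w: "w > 0" shows "has_mean (p_eq w) w"
proof -
  have e: "\<And>x. indicator {0..} x *\<^sub>R (x * p_eq w x) = erlang_density 1 (2/w) x * x ^ 1"
    using p_eq_ind[OF w] by (simp add: algebra_simps)
  show ?thesis unfolding has_mean_def set_integrable_def set_lebesgue_integral_def e
    using erlang_moment_int[OF w, of 1] w by simp
qed



lemma exp_tail_nn:
  fixes l a :: real assumes l: "l > 0"
  shows "(\<integral>\<^sup>+u. ennreal (l * exp (-l*u)) * indicator {a..} u \<partial>lborel) = ennreal (exp (-l*a))"
proof -
  have "(\<integral>\<^sup>+u. ennreal (l * exp (-l*u)) * indicator {a..} u \<partial>lborel)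
      = (\<integral>\<^sup>+x. ennreal (l * exp (-l*(a + 1 * x))) * indicator {a..} (a + 1 * x) \<partial>lborel)"
    by (subst nn_integral_real_affine[where c=1 and t=a]) simp_all
  also have "\<dots> = (\<integral>\<^sup>+x. ennreal (exp (-l*a)) * ennreal (erlang_density 0 l x) \<partial>lborel)"
    by (intro nn_integral_cong) (auto simp: erlang_density_def indicator_def ennreal_mult'[symmetric]
         exp_add[symmetric] algebra_simps)
  also have "\<dots> = ennreal (exp (-l*a)) * (\<integral>\<^sup>+x. ennreal (erlang_density 0 l x) \<partial>lborel)"
    by (rule nn_integral_cmult) simp
  also have "(\<integral>\<^sup>+x. ennreal (erlang_density 0 l x) \<partial>lborel) = 1"
    using nn_integral_erlang_ith_moment[OF l, of 0 0] by simp
  finally show ?thesis by simp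
qed

lemma exp_tail_int:
  fixes l a :: real assumes l: "l > 0"
  shows "integrable lborel (\<lambda>u. indicator {a<..} u * (l * exp (-l*u)))"
    "integral\<^sup>L lborel (\<lambda>u. indicator {a<..} u * (l * exp (-l*u))) = exp (-l*a)"
proof -
  have "(\<integral>\<^sup>+u. ennreal (indicator {a<..} u * (l * exp (-l*u))) \<partial>lborel)
      = (\<integral>\<^sup>+u. ennreal (l * exp (-l*u)) * indicator {a..} u \<partial>lborel)"
  proof (rule nn_integral_cong_AE)
    show "AE u in lborel. ennreal (indicator {a<..} u * (l * exp (-l*u))) = ennreal (l * exp (-l*u)) * indicator {a..} u"
      using AE_lborel_singleton[of a] by eventually_elim (auto simp: indicator_def)
  qed
  also have "\<dots> = ennreal (exp (-l*a))" by (rule exp_tail_nn[OF l])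
  finally have e: "(\<integral>\<^sup>+u. ennreal (indicator {a<..} u * (l * exp (-l*u))) \<partial>lborel) = ennreal (exp (-l*a))" .
  have "integrable lborel (\<lambda>u. indicator {a<..} u * (l * exp (-l*u))) \<and>
     integral\<^sup>L lborel (\<lambda>u. indicator {a<..} u * (l * exp (-l*u))) = exp (-l*a)"
    using nn_integral_eq_integrable[of "\<lambda>u. indicator {a<..} u * (l * exp (-l*u))" lborel "exp (-l*a)"] e l
    by (simp add: indicator_def)
  then show "integrable lborel (\<lambda>u. indicator {a<..} u * (l * exp (-l*u)))"
    "integral\<^sup>L lborel (\<lambda>u. indicator {a<..} u * (l * exp (-l*u))) = exp (-l*a)" by auto
qed

lemma S_p_eq: assumes w: "w > 0" and x: "x \<ge> 0"
  shows "S_op (p_eq w) x = 2/w * exp (-(2/w)*x)"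
proof -
  have e: "\<And>u. indicator {x<..} u *\<^sub>R (p_eq w u / u) = 2/w * (indicator {x<..} u * ((2/w) * exp (-(2/w)*u)))"
    using x w by (auto simp: indicator_def p_eq_def power2_eq_square field_simps)
  have l: "2/w > 0" using w by simp
  show ?thesis unfolding S_op_def set_lebesgue_integral_def e integral_mult_right_zero
    exp_tail_int(2)[OF l] ..
qed

lemma T_p_eq: assumes w: "w > 0" and x: "x \<ge> 0"
  shows "T_op (p_eq w) x = p_eq w x"
proof -
  have e: "\<And>v. indicator {0..x} v *\<^sub>R (S_op (p_eq w) (x - v) * S_op (p_eq w) v)
     = indicator {0..x} v * (4/w^2 * exp (-(2/w)*x))"
    using x w by (auto simp: indicator_def S_p_eq power2_eq_square exp_add[symmetric] field_simps)
  have "T_op (p_eq w) x = (LINT v|lborel. indicator {0..x} v * (4/w^2 * exp (-(2/w)*x)))"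
    unfolding T_op_def set_lebesgue_integral_def e ..
  also have "\<dots> = measure lborel {0..x} * (4/w^2 * exp (-(2/w)*x))"
    by simp
  also have "\<dots> = p_eq w x" using x by (simp add: p_eq_def)
  finally show ?thesis .
qed

lemma p_eq_equilibrium: "w > 0 \<Longrightarrow> is_equilibrium (p_eq w)"
  unfolding is_equilibrium_def using p_eq_density T_p_eq by auto



definition pp :: "(real \<Rightarrow> real) \<Rightarrow> real \<Rightarrow> real" where
  "pp p x = indicator {0..} x * p x"
definition PM :: "(real \<Rightarrow> real) \<Rightarrow> real measure" where
  "PM p = density lborel (\<lambda>x. ennreal (pp p x))"
definition rr :: "(real \<Rightarrow> real) \<Rightarrow> real \<Rightarrow> real" where
  "rr p u = indicator {0<..} u * pp p u / u"
definition SN :: "(real \<Rightarrow> real) \<Rightarrow> real \<Rightarrow> ennreal" where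
  "SN p y = (\<integral>\<^sup>+u. ennreal (rr p u * indicator {y<..} u) \<partial>lborel)"
definition SG :: "(real \<Rightarrow> real) \<Rightarrow> real \<Rightarrow> ennreal" where
  "SG p y = indicator {0<..} y * SN p y"
definition SM :: "(real \<Rightarrow> real) \<Rightarrow> real measure" where
  "SM p = density lborel (SG p)"
definition UM :: "real measure" where
  "UM = density lborel (indicator {0..<1})"

context
  fixes p :: "real \<Rightarrow> real"
  assumes dens: "is_density p"
begin

lemma pp_int: "integrable lborel (pp p)"
  using dens unfolding is_density_def set_integrable_def pp_def by simp

lemma pp_meas[measurable]: "pp p \<in> borel_measurable borel"
  using borel_measurable_integrable[OF pp_int] by simp

lemma pp_nonneg: "0 \<le> pp p x"
  using dens unfolding is_density_def pp_def by (auto simp: indicator_def)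

lemma pp_integral: "integral\<^sup>L lborel (pp p) = 1"
  using dens unfolding is_density_def set_lebesgue_integral_def pp_def by simp

lemma pp_nn_integral: "(\<integral>\<^sup>+x. ennreal (pp p x) \<partial>lborel) = 1"
  using nn_integral_eq_integral[OF pp_int] pp_nonneg pp_integral by simp

lemma PM_real_distribution: "real_distribution (PM p)"
proof -
  have "prob_space (PM p)"
    by (rule prob_spaceI) (simp add: PM_def emeasure_density pp_nn_integral)
  then show ?thesis unfolding real_distribution_def real_distribution_axioms_def PM_def by simp
qed

lemma rr_meas[measurable]: "rr p \<in> borel_measurable borel"
  unfolding rr_def by measurable

lemma rr_nonneg: "0 \<le> rr p u"
  unfolding rr_def using pp_nonneg by (auto simp: indicator_def)

lemma SN_meas[measurable]: "SN p \<in> borel_measurable borel"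
proof -
  have "(\<lambda>(y, u). ennreal (rr p u * indicator {y<..} u)) \<in> borel_measurable (lborel \<Otimes>\<^sub>M lborel)"
  proof -
    have "(\<lambda>z::real\<times>real. ennreal (rr p (snd z) * (if fst z < snd z then 1 else 0))) \<in> borel_measurable (lborel \<Otimes>\<^sub>M lborel)"
      by measurable
    moreover have "(\<lambda>z::real\<times>real. ennreal (rr p (snd z) * (if fst z < snd z then 1 else 0))) = (\<lambda>(y, u). ennreal (rr p u * indicator {y<..} u))"
      by (auto simp: fun_eq_iff indicator_def)
    ultimately show ?thesis by simp
  qed
  then show ?thesis unfolding SN_def[abs_def]
    using lborel.borel_measurable_nn_integral_fst[of "\<lambda>(y,u). ennreal (rr p u * indicator {y<..} u)"]
    by simp
qed

lemma SG_meas[measurable]: "SG p \<in> borel_measurable borel"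
  unfolding SG_def[abs_def] by measurable

lemma SN_eq:
  assumes y: "y > 0"
  shows "SN p y = ennreal (S_op p y)" and "0 \<le> S_op p y"
proof -
  have e: "(\<lambda>u. indicator {y<..} u *\<^sub>R (p u / u)) = (\<lambda>u. rr p u * indicator {y<..} u)"
    using y by (auto simp: fun_eq_iff indicator_def rr_def pp_def)
  have int: "integrable lborel (\<lambda>u. rr p u * indicator {y<..} u)"
  proof (rule Bochner_Integration.integrable_bound[where f="\<lambda>u. pp p u / y"])
    show "integrable lborel (\<lambda>u. pp p u / y)" using pp_int by simp
    show "(\<lambda>u. rr p u * indicator {y<..} u) \<in> borel_measurable lborel" by simp
    show "AE x in lborel. norm (rr p x * indicator {y<..} x) \<le> norm (pp p x / y)"
    proof (rule AE_I2)
      fix x show "norm (rr p x * indicator {y<..} x) \<le> norm (pp p x / y)"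
        using y pp_nonneg[of x]
        by (auto simp: rr_def indicator_def abs_mult field_simps intro!: mult_right_mono)
    qed
  qed
  have S: "S_op p y = integral\<^sup>L lborel (\<lambda>u. rr p u * indicator {y<..} u)"
    unfolding S_op_def set_lebesgue_integral_def e ..
  show "SN p y = ennreal (S_op p y)" unfolding S SN_def
    using nn_integral_eq_integral[OF int] rr_nonneg by simp
  show "0 \<le> S_op p y" unfolding S using rr_nonneg by (simp add: integral_nonneg)
qed

end


lemma UM_prob: "prob_space UM"
proof (rule prob_spaceI)
  show "emeasure UM (space UM) = 1"
    unfolding UM_def by (simp add: emeasure_density)
qed

lemma sets_UM[simp, measurable_cong]: "sets UM = sets borel"
  by (simp add: UM_def)

context
  fixes p :: "real \<Rightarrow> real"
  assumes dens: "is_density p"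
begin

lemma PM_prob: "prob_space (PM p)"
  using PM_real_distribution[OF dens] by (simp add: real_distribution_def)

lemma sets_PM[simp, measurable_cong]: "sets (PM p) = sets borel"
  by (simp add: PM_def)

lemma SM_distr: "SM p = distr (UM \<Otimes>\<^sub>M PM p) borel (\<lambda>(s,u). s*u)"
proof (rule measure_eqI)
  show "sets (SM p) = sets (distr (UM \<Otimes>\<^sub>M PM p) borel (\<lambda>(s,u). s*u))" by (simp add: SM_def)
  fix A assume "A \<in> sets (SM p)"
  then have A[measurable]: "A \<in> sets borel" by (simp add: SM_def)
  interpret U: prob_space UM by (rule UM_prob)
  interpret P: prob_space "PM p" by (rule PM_prob)
  interpret pair_sigma_finite UM "PM p" ..
  note [measurable] = pp_meas[OF dens] rr_meas[OF dens] SG_meas[OF dens]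
  have "emeasure (distr (UM \<Otimes>\<^sub>M PM p) borel (\<lambda>(s,u). s*u)) A
      = (\<integral>\<^sup>+x. indicator A x \<partial>distr (UM \<Otimes>\<^sub>M PM p) borel (\<lambda>(s,u). s*u))"
    by simp
  also have "\<dots> = (\<integral>\<^sup>+z. indicator A ((\<lambda>(s,u). s*u) z) \<partial>(UM \<Otimes>\<^sub>M PM p))"
    by (rule nn_integral_distr) simp_all
  also have "\<dots> = (\<integral>\<^sup>+u. \<integral>\<^sup>+s. indicator A (s*u) \<partial>UM \<partial>PM p)"
    by (subst nn_integral_snd[symmetric]) (simp_all add: case_prod_beta)
  also have "\<dots> = (\<integral>\<^sup>+u. ennreal (pp p u) * (\<integral>\<^sup>+s. indicator {0..<1} s * indicator A (s*u) \<partial>lborel) \<partial>lborel)"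
    by (simp add: PM_def UM_def nn_integral_density)
  also have "\<dots> = (\<integral>\<^sup>+u. \<integral>\<^sup>+y. ennreal (rr p u * (if 0 \<le> y \<and> y < u then 1 else 0)) * indicator A y \<partial>lborel \<partial>lborel)"
  proof (rule nn_integral_cong_AE)
    show "AE u in lborel. ennreal (pp p u) * (\<integral>\<^sup>+s. indicator {0..<1} s * indicator A (s*u) \<partial>lborel)
      = (\<integral>\<^sup>+y. ennreal (rr p u * (if 0 \<le> y \<and> y < u then 1 else 0)) * indicator A y \<partial>lborel)"
      using AE_lborel_singleton[of 0]
    proof eventually_elim
      fix u :: real assume "u \<noteq> 0"
      show "ennreal (pp p u) * (\<integral>\<^sup>+s. indicator {0..<1} s * indicator A (s*u) \<partial>lborel)
        = (\<integral>\<^sup>+y. ennreal (rr p u * (if 0 \<le> y \<and> y < u then 1 else 0)) * indicator A y \<partial>lborel)"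
      proof (cases "u < 0")
        case True
        then show ?thesis by (simp add: pp_def rr_def)
      next
        case False
        with \<open>u \<noteq> 0\<close> have u: "u > 0" by simp
        have "(\<integral>\<^sup>+y. ennreal (rr p u * (if 0 \<le> y \<and> y < u then 1 else 0)) * indicator A y \<partial>lborel)
          = ennreal \<bar>u\<bar> * (\<integral>\<^sup>+s. ennreal (rr p u * (if 0 \<le> 0 + u * s \<and> 0 + u * s < u then 1 else 0)) * indicator A (0 + u * s) \<partial>lborel)"
          using u by (intro nn_integral_real_affine) simp_all
        also have "\<dots> = ennreal u * (\<integral>\<^sup>+s. ennreal (rr p u) * (indicator {0..<1} s * indicator A (s * u)) \<partial>lborel)"
        proof -
          have iff: "\<And>s. (0 \<le> u * s \<and> u * s < u) = (0 \<le> s \<and> s < 1)"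
            using u by (simp add: zero_le_mult_iff)
          have iff': "\<And>s. (0 \<le> s * u \<and> s * u < u) = (0 \<le> s \<and> s < 1)"
            using u by (simp add: zero_le_mult_iff)
          have pw: "\<And>s. ennreal (rr p u * (if 0 \<le> 0 + u * s \<and> 0 + u * s < u then 1 else 0)) * indicator A (0 + u * s)
              = ennreal (rr p u) * (indicator {0..<1} s * indicator A (s * u))"
          proof -
            fix s :: real
            show "ennreal (rr p u * (if 0 \<le> 0 + u * s \<and> 0 + u * s < u then 1 else 0)) * indicator A (0 + u * s)
              = ennreal (rr p u) * (indicator {0..<1} s * indicator A (s * u))"
            proof (cases "0 \<le> s \<and> s < 1")
              case True then have "0 \<le> u * s \<and> u * s < u" using iff by simp
              then show ?thesis using True by (simp add: indicator_def mult.commute)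
            next
              case False then have "\<not> (0 \<le> u * s \<and> u * s < u)" using iff by simp
              then show ?thesis using False by (auto simp: indicator_def)
            qed
          qed
          have i: "(\<integral>\<^sup>+s. ennreal (rr p u * (if 0 \<le> 0 + u * s \<and> 0 + u * s < u then 1 else 0)) * indicator A (0 + u * s) \<partial>lborel)
              = (\<integral>\<^sup>+s. ennreal (rr p u) * (indicator {0..<1} s * indicator A (s * u)) \<partial>lborel)"
            by (rule nn_integral_cong) (rule pw)
          show ?thesis unfolding i using u by simp
        qed
        also have "\<dots> = ennreal u * (ennreal (rr p u) * (\<integral>\<^sup>+s. indicator {0..<1} s * indicator A (s * u) \<partial>lborel))"
          by (subst nn_integral_cmult) simp_all
        also have "\<dots> = ennreal (u * rr p u) * (\<integral>\<^sup>+s. indicator {0..<1} s * indicator A (s * u) \<partial>lborel)"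
          using u rr_nonneg[OF dens, of u] by (simp add: ennreal_mult mult.assoc)
        also have "u * rr p u = pp p u" using u by (simp add: rr_def)
        finally show ?thesis by simp
      qed
    qed
  qed
  also have "\<dots> = (\<integral>\<^sup>+y. \<integral>\<^sup>+u. ennreal (rr p u * (if 0 \<le> y \<and> y < u then 1 else 0)) * indicator A y \<partial>lborel \<partial>lborel)"
    by (rule lborel_pair.Fubini') measurable
  also have "\<dots> = (\<integral>\<^sup>+y. SG p y * indicator A y \<partial>lborel)"
  proof (rule nn_integral_cong_AE)
    show "AE y in lborel. (\<integral>\<^sup>+u. ennreal (rr p u * (if 0 \<le> y \<and> y < u then 1 else 0)) * indicator A y \<partial>lborel) = SG p y * indicator A y"
      using AE_lborel_singleton[of 0]
    proof eventually_elim
      fix y :: real assume "y \<noteq> 0"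
      show "(\<integral>\<^sup>+u. ennreal (rr p u * (if 0 \<le> y \<and> y < u then 1 else 0)) * indicator A y \<partial>lborel) = SG p y * indicator A y"
      proof (cases "y < 0")
        case True then show ?thesis by (simp add: SG_def)
      next
        case False
        with \<open>y \<noteq> 0\<close> have y: "y > 0" by simp
        have "(\<integral>\<^sup>+u. ennreal (rr p u * (if 0 \<le> y \<and> y < u then 1 else 0)) * indicator A y \<partial>lborel)
            = (\<integral>\<^sup>+u. ennreal (rr p u * indicator {y<..} u) \<partial>lborel) * indicator A y"
          using y by (subst nn_integral_multc[symmetric]) (auto intro!: nn_integral_cong simp: indicator_def)
        then show ?thesis using y by (simp add: SG_def SN_def)
      qed
    qed
  qed
  also have "\<dots> = emeasure (SM p) A"
    by (simp add: SM_def emeasure_density)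
  finally show "emeasure (SM p) A = emeasure (distr (UM \<Otimes>\<^sub>M PM p) borel (\<lambda>(s,u). s*u)) A" ..
qed

lemma SM_prob: "prob_space (SM p)"
proof -
  interpret U1: prob_space UM by (rule UM_prob)
  interpret P1: prob_space "PM p" by (rule PM_prob)
  interpret pair_prob_space UM "PM p" ..
  show ?thesis unfolding SM_distr by (rule prob_space_distr) simp
qed

end


lemma sets_PM'[simp, measurable_cong]: "sets (PM p) = sets borel"
  by (simp add: PM_def)

lemma sets_SM[simp, measurable_cong]: "sets (SM p) = sets borel"
  by (simp add: SM_def)

lemma char_conv:
  assumes M: "prob_space M" and N: "prob_space N"
    and [measurable_cong]: "sets M = sets borel" "sets N = sets borel"
  shows "char (M \<star> N) t = char M t * char N t"
proof -
  interpret M: prob_space M by (rule M)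
  interpret N: prob_space N by (rule N)
  interpret pair_prob_space M N ..
  have int: "integrable (M \<Otimes>\<^sub>M N) (\<lambda>(x, y). iexp (t * x) * iexp (t * y))"
    by (rule integrable_const_bound[where B=1]) (auto simp: norm_mult)
  have "char (M \<star> N) t = (CLINT z|M \<Otimes>\<^sub>M N. iexp (t * ((\<lambda>(x,y). x + y) z)))"
    unfolding convolution_def char_def by (rule integral_distr) simp_all
  also have "\<dots> = (CLINT z|M \<Otimes>\<^sub>M N. (\<lambda>(x, y). iexp (t * x) * iexp (t * y)) z)"
    by (rule Bochner_Integration.integral_cong) (auto simp: distrib_left exp_add)
  also have "\<dots> = (CLINT x|M. CLINT y|N. iexp (t * x) * iexp (t * y))"
    by (rule integral_fst[symmetric, OF int])
  also have "\<dots> = (CLINT x|M. iexp (t * x) * char N t)"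
    unfolding char_def by (simp add: integral_mult_right_zero)
  also have "\<dots> = char M t * char N t"
    unfolding char_def by (simp add: integral_mult_left_zero)
  finally show ?thesis .
qed

context
  fixes p :: "real \<Rightarrow> real"
  assumes dens: "is_density p"
begin

lemma char_SM: "char (SM p) t = (CLINT s|UM. char (PM p) (t * s))"
proof -
  interpret U1: prob_space UM by (rule UM_prob)
  interpret P1: prob_space "PM p" by (rule PM_prob[OF dens])
  interpret pair_prob_space UM "PM p" ..
  have m: "(\<lambda>(s, u). iexp (t * (s * u))) \<in> borel_measurable (UM \<Otimes>\<^sub>M PM p)"
    by measurable
  have int: "integrable (UM \<Otimes>\<^sub>M PM p) (\<lambda>(s, u). iexp (t * (s * u)))"
    by (rule integrable_const_bound[where B=1]) (auto intro: m)
  have "char (SM p) t = (CLINT z|UM \<Otimes>\<^sub>M PM p. iexp (t * ((\<lambda>(s,u). s * u) z)))"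
    unfolding SM_distr[OF dens] char_def by (rule integral_distr) simp_all
  also have "\<dots> = (CLINT z|UM \<Otimes>\<^sub>M PM p. (\<lambda>(s, u). iexp (t * (s * u))) z)"
    by (rule Bochner_Integration.integral_cong) auto
  also have "\<dots> = (CLINT s|UM. CLINT u|PM p. iexp (t * (s * u)))"
    by (rule integral_fst[symmetric, OF int])
  also have "\<dots> = (CLINT s|UM. char (PM p) (t * s))"
    unfolding char_def by (simp add: mult.assoc)
  finally show ?thesis .
qed

end

context
  fixes p :: "real \<Rightarrow> real"
  assumes eq: "is_equilibrium p"
begin

lemma eq_dens: "is_density p" using eq unfolding is_equilibrium_def by simp

lemma PM_conv: "PM p = (SM p \<star> SM p)"
proof -
  note dens = eq_dens
  note [measurable] = SG_meas[OF dens] pp_meas[OF dens]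
  interpret S: prob_space "SM p" by (rule SM_prob[OF dens])
  have fin: "finite_measure (density lborel (SG p))"
    unfolding SM_def[symmetric] by (rule finite_measureI) simp
  let ?c = "\<lambda>x. \<integral>\<^sup>+y. SG p (x - y) * SG p y \<partial>lborel"
  have conv: "(SM p \<star> SM p) = density lborel ?c"
    unfolding SM_def by (rule convolution_density) (simp_all add: fin)
  have cm[measurable]: "?c \<in> borel_measurable borel" by measurable
  have "finite_measure ((SM p \<star> SM p))"
    by (rule convolution_finite) (simp_all add: fin SM_def[symmetric] S.finite_measure_axioms)
  then have "emeasure (SM p \<star> SM p) UNIV \<noteq> \<infinity>"
    using finite_measure.emeasure_finite by auto
  then have "emeasure (density lborel ?c) UNIV \<noteq> \<infinity>" by (metis conv)
  moreover have "emeasure (density lborel ?c) UNIV = integral\<^sup>N lborel ?c"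
    by (subst emeasure_density) simp_all
  ultimately have fin2: "integral\<^sup>N lborel ?c \<noteq> \<infinity>" by simp
  have AEfin: "AE x in lborel. ?c x \<noteq> \<infinity>"
    by (rule nn_integral_PInf_AE[OF _ fin2]) simp
  have AEeq: "AE x in lborel. x \<ge> 0 \<longrightarrow> T_op p x = p x"
    using eq unfolding is_equilibrium_def by simp
  have "AE x in lborel. ennreal (pp p x) = ?c x"
    using AEfin AEeq
  proof eventually_elim
    fix x assume fx: "?c x \<noteq> \<infinity>" and T: "0 \<le> x \<longrightarrow> T_op p x = p x"
    show "ennreal (pp p x) = ?c x"
    proof (cases "x < 0")
      case True
      have "?c x = (\<integral>\<^sup>+(y::real). 0 \<partial>lborel)"
        by (rule nn_integral_cong) (use True in \<open>auto simp: SG_def indicator_def\<close>)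
      then show ?thesis using True by (simp add: pp_def)
    next
      case False
      then have x: "x \<ge> 0" by simp
      define h where "h v = indicator {0<..<x} v * (enn2real (SG p (x - v)) * enn2real (SG p v))" for v
      have hm[measurable]: "h \<in> borel_measurable borel" unfolding h_def[abs_def] by measurable
      have hn: "\<And>v. 0 \<le> h v" unfolding h_def by (simp add: enn2real_nonneg)
      have SGe: "\<And>y. y > 0 \<Longrightarrow> SG p y = ennreal (S_op p y)"
        by (simp add: SG_def SN_eq[OF dens])
      have hc: "SG p (x - v) * SG p v = ennreal (h v)" for v
      proof (cases "0 < v \<and> v < x")
        case True
        then show ?thesis using SGe[of v] SGe[of "x - v"] SN_eq(2)[OF dens, of v] SN_eq(2)[OF dens, of "x - v"]
          by (simp add: h_def ennreal_mult)
      next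
        case False
        then show ?thesis by (auto simp: h_def SG_def indicator_def)
      qed
      have ce: "?c x = (\<integral>\<^sup>+v. ennreal (h v) \<partial>lborel)" by (simp add: hc)
      have cx: "?c x = ennreal (enn2real (?c x))" using fx by (simp add: less_top)
      have "integrable lborel h \<and> integral\<^sup>L lborel h = enn2real (?c x)"
        using nn_integral_eq_integrable[of h lborel "enn2real (?c x)"] hn ce cx by simp
      then have ih: "integral\<^sup>L lborel h = enn2real (?c x)" by simp
      have "T_op p x = integral\<^sup>L lborel h"
        unfolding T_op_def set_lebesgue_integral_def
      proof (rule integral_discrete_difference[where X="{0, x}"])
        fix v assume "v \<notin> {0, x}"
        then show "indicator {0..x} v *\<^sub>R (S_op p (x - v) * S_op p v) = h v"
          using SGe[of v] SGe[of "x - v"] SN_eq(2)[OF dens, of v] SN_eq(2)[OF dens, of "x - v"]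
          by (auto simp: h_def indicator_def)
      qed simp_all
      with T x ih have "p x = enn2real (?c x)" by simp
      then show ?thesis using x cx by (simp add: pp_def)
    qed
  qed
  then show ?thesis unfolding conv PM_def by (rule density_cong[rotated 2]) simp_all
qed

lemma char_fix: "char (PM p) t = (CLINT s|UM. char (PM p) (t * s))^2"
proof -
  have "char (PM p) t = char (SM p) t * char (SM p) t"
    apply (subst PM_conv)
    by (rule char_conv) (simp_all add: SM_prob[OF eq_dens])
  then show ?thesis by (simp add: char_SM[OF eq_dens] power2_eq_square)
qed

end


lemma UM_density: "UM = density lborel (\<lambda>x. ennreal (indicator {0..<1} x))"
  by (simp add: UM_def ennreal_indicator)

lemma UM_integral:
  fixes h :: "real \<Rightarrow> 'b::{banach, second_countable_topology}"
  assumes [measurable]: "h \<in> borel_measurable borel"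
  shows "integral\<^sup>L UM h = (LINT s|lborel. indicator {0..<1} s *\<^sub>R h s)"
  unfolding UM_density by (rule integral_density) simp_all

lemma int_s_Icc: fixes a b :: real shows "0 \<le> a \<Longrightarrow> a \<le> b \<Longrightarrow> (LINT s|lborel. s * indicator {a..b} s) = (b^2 - a^2) / 2"
  using integral_power[of a b 1] by (simp add: power2_eq_square)

lemma int_s_Icc_int: "integrable lborel (\<lambda>s::real. s * indicator {a..b} s)"
  by (rule borel_integrable_atLeastAtMost) simp

lemma UM_s_low: assumes "0 \<le> d" "d < 1"
  shows "(LINT s|UM. s * indicator {0..d} s) = d^2 / 2"
proof -
  have "(LINT s|UM. s * indicator {0..d} s) = (LINT s|lborel. s * indicator {0..d} s)"
    using assms by (subst UM_integral) (auto intro!: Bochner_Integration.integral_cong simp: indicator_def)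
  also have "\<dots> = d^2/2" using int_s_Icc[of 0 d] assms by simp
  finally show ?thesis .
qed

lemma UM_s_high: assumes "0 \<le> d" "d < 1"
  shows "(LINT s|UM. s * indicator {d..1} s) = (1 - d^2) / 2"
proof -
  have "(LINT s|UM. s * indicator {d..1} s) = (LINT s|lborel. indicator {0..<1} s * (s * indicator {d..1} s))"
    by (subst UM_integral) simp_all
  also have "\<dots> = (LINT s|lborel. s * indicator {d..1} s)"
    by (rule integral_discrete_difference[where X="{1}"]) (use assms in \<open>auto simp: indicator_def\<close>)
  also have "\<dots> = (1 - d^2)/2" using int_s_Icc[of d 1] assms by simp
  finally show ?thesis .
qed

lemma fix_step:
  fixes f g :: "real \<Rightarrow> complex"
  assumes [measurable]: "f \<in> borel_measurable borel" "g \<in> borel_measurable borel"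
    and nf: "\<And>t. cmod (f t) \<le> 1" and ng: "\<And>t. cmod (g t) \<le> 1"
    and ff: "\<And>t. f t = (CLINT s|UM. f (t * s))^2" and gf: "\<And>t. g t = (CLINT s|UM. g (t * s))^2"
  shows "cmod (f t - g t) \<le> 2 * (LINT s|UM. cmod (f (t * s) - g (t * s)))"
proof -
  interpret U: prob_space UM by (rule UM_prob)
  define A where "A = (CLINT s|UM. f (t * s))"
  define B where "B = (CLINT s|UM. g (t * s))"
  have intf: "integrable UM (\<lambda>s. f (t * s))"
    by (rule U.integrable_const_bound[where B=1]) (simp_all add: nf)
  have intg: "integrable UM (\<lambda>s. g (t * s))"
    by (rule U.integrable_const_bound[where B=1]) (simp_all add: ng)
  have nA: "cmod A \<le> 1"
  proof -
    have "cmod A \<le> (LINT s|UM. cmod (f (t * s)))" unfolding A_def by (rule integral_norm_bound)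
    also have "\<dots> \<le> (LINT s|UM. 1)"
      by (rule integral_mono) (simp_all add: nf intf integrable_norm)
    finally show ?thesis by (simp add: U.prob_space)
  qed
  have nB: "cmod B \<le> 1"
  proof -
    have "cmod B \<le> (LINT s|UM. cmod (g (t * s)))" unfolding B_def by (rule integral_norm_bound)
    also have "\<dots> \<le> (LINT s|UM. 1)"
      by (rule integral_mono) (simp_all add: ng intg integrable_norm)
    finally show ?thesis by (simp add: U.prob_space)
  qed
  have "A - B = (CLINT s|UM. f (t * s) - g (t * s))"
    unfolding A_def B_def by (rule Bochner_Integration.integral_diff[symmetric, OF intf intg])
  then have nAB: "cmod (A - B) \<le> (LINT s|UM. cmod (f (t * s) - g (t * s)))"
    by (simp add: integral_norm_bound)
  have "f t - g t = (A - B) * (A + B)"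
    using ff[of t] gf[of t] unfolding A_def[symmetric] B_def[symmetric] by (simp add: power2_eq_square algebra_simps)
  then have "cmod (f t - g t) = cmod (A - B) * cmod (A + B)" by (simp add: norm_mult)
  also have "\<dots> \<le> (LINT s|UM. cmod (f (t * s) - g (t * s))) * 2"
  proof (rule mult_mono)
    show "cmod (A + B) \<le> 2" using norm_triangle_ineq[of A B] nA nB by simp
  qed (simp_all add: nAB integral_nonneg)
  finally show ?thesis by simp
qed



lemma contraction:
  fixes f g :: "real \<Rightarrow> complex" and \<beta> :: "real \<Rightarrow> real"
  assumes fm[measurable]: "f \<in> borel_measurable borel" and gm[measurable]: "g \<in> borel_measurable borel"
    and nf: "\<And>t. cmod (f t) \<le> 1" and ng: "\<And>t. cmod (g t) \<le> 1"
    and ff: "\<And>t. f t = (CLINT s|UM. f (t * s))^2" and gf: "\<And>t. g t = (CLINT s|UM. g (t * s))^2"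
    and bnd: "\<And>t. cmod (f t - g t) \<le> \<bar>t\<bar> * \<beta> \<bar>t\<bar>"
    and bmono: "\<And>r r'. 0 \<le> r \<Longrightarrow> r \<le> r' \<Longrightarrow> \<beta> r \<le> \<beta> r'"
    and bnn: "\<And>r. 0 \<le> r \<Longrightarrow> 0 \<le> \<beta> r"
    and blim: "\<And>e. e > 0 \<Longrightarrow> \<exists>r>0. \<beta> r \<le> e"
  shows "f t0 = g t0"
proof -
  interpret U: prob_space UM by (rule UM_prob)
  define D where "D t = cmod (f t - g t)" for t
  have Dm[measurable]: "D \<in> borel_measurable borel" unfolding D_def[abs_def] by measurable
  have Dn: "\<And>t. 0 \<le> D t" unfolding D_def by simp
  have Db: "\<And>t. D t \<le> 2" unfolding D_def using nf ng norm_triangle_ineq4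
    by (metis add_mono one_add_one order_trans)
  show ?thesis
  proof (cases "t0 = 0")
    case True then show ?thesis using bnd[of 0] by simp
  next
    case False
    define T where "T = \<bar>t0\<bar>"
    have T: "T > 0" using False by (simp add: T_def)
    define Q where "Q = (\<lambda>t. D t / \<bar>t\<bar>) ` {t. 0 < \<bar>t\<bar> \<and> \<bar>t\<bar> \<le> T}"
    have Qne: "Q \<noteq> {}" using T unfolding Q_def T_def by auto
    have Qbd: "q \<le> \<beta> T" if qQ: "q \<in> Q" for q
    proof -
      obtain t where t: "0 < \<bar>t\<bar>" "\<bar>t\<bar> \<le> T" and q: "q = D t / \<bar>t\<bar>" using qQ unfolding Q_def by blast
      have "D t \<le> \<bar>t\<bar> * \<beta> \<bar>t\<bar>" using bnd unfolding D_def by simp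
      then have "q \<le> \<beta> \<bar>t\<bar>" using t by (simp add: q pos_divide_le_eq mult.commute)
      also have "\<dots> \<le> \<beta> T" using t bmono by simp
      finally show ?thesis .
    qed
    have bdd: "bdd_above Q" using Qbd by (rule bdd_aboveI)
    define m where "m = Sup Q"
    have mup: "D t \<le> \<bar>t\<bar> * m" if "0 < \<bar>t\<bar>" "\<bar>t\<bar> \<le> T" for t
    proof -
      have "D t / \<bar>t\<bar> \<in> Q" using that unfolding Q_def by auto
      then have "D t / \<bar>t\<bar> \<le> m" unfolding m_def using bdd by (rule cSup_upper)
      then show ?thesis using that by (simp add: pos_divide_le_eq mult.commute)
    qed
    have "D t0 / \<bar>t0\<bar> \<in> Q" using T unfolding Q_def T_def by auto
    then have "D t0 / \<bar>t0\<bar> \<le> m" unfolding m_def using bdd by (rule cSup_upper)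
    then have m0: "0 \<le> m" using Dn[of t0] by (meson divide_nonneg_nonneg abs_ge_zero order_trans)
    have key: "m \<le> e" if e: "e > 0" for e
    proof -
      obtain r where r: "r > 0" "\<beta> r \<le> e" using blim[OF e] by auto
      define d where "d = min (r / T) (1/2)"
      have d: "0 < d" "d < 1" "d * T \<le> r" using r T by (auto simp: d_def min_def field_simps)
      have intl: "integrable UM (\<lambda>s. s * indicator {0..d} s)"
        by (rule U.integrable_const_bound[where B=1]) (use d in \<open>auto simp: indicator_def\<close>)
      have inth: "integrable UM (\<lambda>s. s * indicator {d..1} s)"
        by (rule U.integrable_const_bound[where B=1]) (use d in \<open>auto simp: indicator_def intro!: AE_I2\<close>)
      have bound: "D t / \<bar>t\<bar> \<le> d^2 * \<beta> r + (1 - d^2) * m" if t: "0 < \<bar>t\<bar>" "\<bar>t\<bar> \<le> T" for t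
      proof -
        let ?k = "\<lambda>s. \<bar>t\<bar> * (\<beta> r * (s * indicator {0..d} s) + m * (s * indicator {d..1} s))"
        have pw: "D (t * s) \<le> ?k s" if s: "0 \<le> s" "s < 1" for s
        proof (cases "s \<le> d")
          case True
          have "D (t * s) \<le> \<bar>t * s\<bar> * \<beta> \<bar>t * s\<bar>" using bnd unfolding D_def by simp
          also have "\<dots> \<le> \<bar>t\<bar> * s * \<beta> r"
          proof -
            have "\<bar>t\<bar> * s \<le> T * d" by (rule mult_mono) (use t s True T in auto)
            then have "\<bar>t * s\<bar> \<le> r" using s d by (simp add: abs_mult mult.commute)
            then have "\<beta> \<bar>t * s\<bar> \<le> \<beta> r" using bmono by simp
            then show ?thesis using s by (simp add: abs_mult mult_left_mono)
          qed
          also have "\<dots> \<le> ?k s" using True s m0 by (simp add: indicator_def algebra_simps)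
          finally show ?thesis .
        next
          case False
          have s0: "s > 0" using False d by simp
          have ts1: "\<bar>t\<bar> * s \<le> \<bar>t\<bar>" using s by (simp add: mult_left_le)
          have ts2: "\<bar>t\<bar> * s \<le> T" using ts1 t(2) by linarith
          have ts: "\<bar>t * s\<bar> \<le> T" using ts2 s0 by (simp add: abs_mult)
          have ts0: "0 < \<bar>t * s\<bar>" using t s0 by (simp add: abs_mult)
          have "D (t * s) \<le> \<bar>t * s\<bar> * m" by (rule mup[OF ts0 ts])
          also have "\<dots> = ?k s" using False s by (simp add: indicator_def abs_mult)
          finally show ?thesis by simp
        qed
        have intD: "integrable UM (\<lambda>s. D (t * s))"
          by (rule U.integrable_const_bound[where B=2]) (simp_all add: Dn Db)
        have AEs: "AE s in UM. 0 \<le> s \<and> s < 1"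
          unfolding UM_density by (subst AE_density) (auto simp: indicator_def)
        have "D t \<le> 2 * (LINT s|UM. D (t * s))"
          unfolding D_def by (rule fix_step[OF fm gm nf ng ff gf])
        also have "(LINT s|UM. D (t * s)) \<le> (LINT s|UM. ?k s)"
        proof (rule integral_mono_AE[OF intD])
          show "integrable UM ?k" using intl inth by simp
          show "AE s in UM. D (t * s) \<le> ?k s" using AEs by eventually_elim (rule pw, simp_all)
        qed
        also have "(LINT s|UM. ?k s) = \<bar>t\<bar> * (\<beta> r * (d^2/2) + m * ((1 - d^2)/2))"
        proof -
          have l: "(LINT s|UM. s * indicator {0..d} s) = d^2/2" using UM_s_low[of d] d by simp
          have h: "(LINT s|UM. s * indicator {d..1} s) = (1 - d^2)/2" using UM_s_high[of d] d by simp
          show ?thesis using intl inth by (simp add: l h)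
        qed
        finally have X: "D t \<le> 2 * (\<bar>t\<bar> * (\<beta> r * (d^2/2) + m * ((1 - d^2)/2)))" by simp
        have Y: "2 * (\<bar>t\<bar> * (\<beta> r * (d^2/2) + m * ((1 - d^2)/2))) = \<bar>t\<bar> * (d^2 * \<beta> r + (1 - d^2) * m)"
          by (simp add: field_simps)
        have "D t \<le> \<bar>t\<bar> * (d^2 * \<beta> r + (1 - d^2) * m)" using X Y by linarith
        then show ?thesis using t by (simp add: pos_divide_le_eq mult.commute)
      qed
      have "Sup Q \<le> d^2 * \<beta> r + (1 - d^2) * m"
        using Qne by (rule cSup_least) (auto simp: Q_def intro: bound)
      then have "m \<le> d^2 * \<beta> r + (1 - d^2) * m" by (simp only: m_def[symmetric])
      then have "d^2 * m \<le> d^2 * \<beta> r" by (simp add: algebra_simps)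
      then have "m \<le> \<beta> r" using d by simp
      then show ?thesis using r by simp
    qed
    have "m \<le> 0" by (rule field_le_epsilon) (simp add: key)
    then have "D t0 \<le> 0" using mup[of t0] T unfolding T_def
      by (meson mult_nonneg_nonpos abs_ge_zero order_trans order_refl)
    then show ?thesis using Dn[of t0] unfolding D_def by simp
  qed
qed



definition BB :: "real measure \<Rightarrow> real \<Rightarrow> real" where
  "BB M r = (LINT x|M. min (4 * \<bar>x\<bar>) (r * x^2))"

context real_distribution
begin

lemma BB_int:
  assumes ix: "integrable M (\<lambda>x. x)" and r: "0 \<le> r"
  shows "integrable M (\<lambda>x. min (4 * \<bar>x\<bar>) (r * x^2))"
proof (rule Bochner_Integration.integrable_bound[where f="\<lambda>x. 4 * \<bar>x\<bar>"])
  show "integrable M (\<lambda>x. 4 * \<bar>x\<bar>)" using ix by simp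
  show "(\<lambda>x. min (4 * \<bar>x\<bar>) (r * x^2)) \<in> borel_measurable M" by measurable
  show "AE x in M. norm (min (4 * \<bar>x\<bar>) (r * x^2)) \<le> norm (4 * \<bar>x\<bar>)"
  proof (rule AE_I2)
    fix x :: real
    have h: "0 \<le> r * x^2" using r by simp
    show "norm (min (4 * \<bar>x\<bar>) (r * x^2)) \<le> norm (4 * \<bar>x\<bar>)"
      using h by (auto simp: min_def)
  qed
qed

lemma BB_nonneg: "0 \<le> r \<Longrightarrow> 0 \<le> BB M r"
  unfolding BB_def by (rule integral_nonneg_AE) (simp add: min_def)

lemma BB_mono: assumes ix: "integrable M (\<lambda>x. x)" and "0 \<le> r" "r \<le> r'"
  shows "BB M r \<le> BB M r'"
  unfolding BB_def
proof (rule integral_mono[OF BB_int[OF ix] BB_int[OF ix]])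
  fix x show "min (4 * \<bar>x\<bar>) (r * x^2) \<le> min (4 * \<bar>x\<bar>) (r' * x^2)"
    using assms by (intro min.mono) (simp_all add: mult_right_mono)
qed (use assms in auto)

lemma BB_lim: assumes ix: "integrable M (\<lambda>x. x)"
  shows "(\<lambda>n. BB M (1 / (Suc n))) \<longlonglongrightarrow> 0"
proof -
  have "(\<lambda>n. LINT x|M. min (4 * \<bar>x\<bar>) ((1 / Suc n) * x^2)) \<longlonglongrightarrow> (LINT x|M. 0)"
  proof (rule integral_dominated_convergence[where w="\<lambda>x. 4 * \<bar>x\<bar>"])
    show "integrable M (\<lambda>x. 4 * \<bar>x\<bar>)" using ix by simp
    show "AE x in M. (\<lambda>n. min (4 * \<bar>x\<bar>) ((1 / Suc n) * x^2)) \<longlonglongrightarrow> 0"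
    proof (rule AE_I2)
      fix x :: real
      have "(\<lambda>n. (1 / real (Suc n)) * x^2) \<longlonglongrightarrow> 0 * x^2"
        using tendsto_mult[OF LIMSEQ_inverse_real_of_nat tendsto_const[of "x^2"]]
        by (simp add: inverse_eq_divide)
      then have "(\<lambda>n. min (4 * \<bar>x\<bar>) ((1 / Suc n) * x^2)) \<longlonglongrightarrow> min (4 * \<bar>x\<bar>) (0 * x^2)"
        by (intro tendsto_min tendsto_const)
      then show "(\<lambda>n. min (4 * \<bar>x\<bar>) ((1 / Suc n) * x^2)) \<longlonglongrightarrow> 0" by simp
    qed
    show "AE x in M. norm (min (4 * \<bar>x\<bar>) ((1 / Suc n) * x^2)) \<le> 4 * \<bar>x\<bar>" for n
    proof (rule AE_I2)
      fix x :: real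
      have h: "0 \<le> (1 / Suc n) * x^2" by simp
      show "norm (min (4 * \<bar>x\<bar>) ((1 / Suc n) * x^2)) \<le> 4 * \<bar>x\<bar>"
        using h by (auto simp: min_def simp del: of_nat_Suc)
    qed
  qed simp_all
  then show ?thesis by (simp add: BB_def)
qed

lemma char_bound:
  assumes ix: "integrable M (\<lambda>x. x)" and ew: "expectation (\<lambda>x. x) = w"
  shows "cmod (char M t - (1 + \<i> * t * w)) \<le> \<bar>t\<bar> / 2 * BB M \<bar>t\<bar>"
proof -
  have im: "\<And>k. k \<le> 1 \<Longrightarrow> integrable M (\<lambda>x. x ^ k)"
    using ix by (auto simp: le_Suc_eq)
  have e1: "expectation (\<lambda>x. x ^ 0) = 1" using prob_space by (simp add: space_eq_univ)
  have sum: "(\<Sum>k \<le> 1. ((\<i> * t)^k / fact k) * expectation (\<lambda>x. x^k)) = 1 + \<i> * t * w"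
    using ew e1 by simp
  have ex: "expectation (\<lambda>x. min (2 * \<bar>x\<bar>^1 * Suc 1) (\<bar>t\<bar> * \<bar>x\<bar>^Suc 1)) = BB M \<bar>t\<bar>"
    unfolding BB_def by (rule Bochner_Integration.integral_cong) (simp_all add: power2_abs[symmetric] numeral_eq_Suc mult_ac)
  from char_approx2[where n=1 and t=t, OF im] show ?thesis unfolding sum ex by simp
qed

end



lemma PM_mean:
  assumes d: "is_density p" and m: "has_mean p w"
  shows "integrable (PM p) (\<lambda>x. x)" "integral\<^sup>L (PM p) (\<lambda>x. x) = w"
proof -
  note [measurable] = pp_meas[OF d]
  have e: "(\<lambda>x. pp p x *\<^sub>R x) = (\<lambda>x. indicator {0..} x *\<^sub>R (x * p x))"
    by (auto simp: pp_def fun_eq_iff)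
  have e': "(\<lambda>x. pp p x * x) = (\<lambda>x. indicator {0..} x * (x * p x))"
    by (auto simp: pp_def fun_eq_iff)
  have i: "integrable lborel (\<lambda>x. pp p x *\<^sub>R x)"
    using m unfolding has_mean_def set_integrable_def e by simp
  show "integrable (PM p) (\<lambda>x. x)"
    unfolding PM_def using i pp_nonneg[OF d] by (subst integrable_density) simp_all
  show "integral\<^sup>L (PM p) (\<lambda>x. x) = w"
    unfolding PM_def using m pp_nonneg[OF d]
    by (subst integral_density) (simp_all add: e' has_mean_def set_lebesgue_integral_def)
qed

lemma uniqueness:
  assumes w: "w > 0" and ep: "is_equilibrium p" and mp: "has_mean p w"
  shows "AE x in lborel. x \<ge> 0 \<longrightarrow> p x = p_eq w x"
proof -
  define q where "q = p_eq w"
  have eq: "is_equilibrium q" unfolding q_def using p_eq_equilibrium[OF w] .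
  have mq: "has_mean q w" unfolding q_def using p_eq_mean[OF w] .
  have dp: "is_density p" using ep by (simp add: is_equilibrium_def)
  have dq: "is_density q" using eq by (simp add: is_equilibrium_def)
  interpret P: real_distribution "PM p" by (rule PM_real_distribution[OF dp])
  interpret Q: real_distribution "PM q" by (rule PM_real_distribution[OF dq])
  note ip = PM_mean[OF dp mp] and iq = PM_mean[OF dq mq]
  define \<beta> where "\<beta> r = (BB (PM p) r + BB (PM q) r) / 2" for r
  have chareq: "char (PM p) t0 = char (PM q) t0" for t0
  proof (rule contraction[where \<beta>=\<beta>])
    show "char (PM p) \<in> borel_measurable borel" by (rule P.char_measurable)
    show "char (PM q) \<in> borel_measurable borel" by (rule Q.char_measurable)
    show "cmod (char (PM p) t) \<le> 1" for t by (rule P.cmod_char_le_1)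
    show "cmod (char (PM q) t) \<le> 1" for t by (rule Q.cmod_char_le_1)
    show "char (PM p) t = (CLINT s|UM. char (PM p) (t * s))^2" for t by (rule char_fix[OF ep])
    show "char (PM q) t = (CLINT s|UM. char (PM q) (t * s))^2" for t by (rule char_fix[OF eq])
    show "cmod (char (PM p) t - char (PM q) t) \<le> \<bar>t\<bar> * \<beta> \<bar>t\<bar>" for t
    proof -
      let ?c = "1 + \<i> * t * w"
      have "cmod (char (PM p) t - char (PM q) t) \<le> cmod (char (PM p) t - ?c) + cmod (char (PM q) t - ?c)"
        using norm_triangle_ineq4[of "char (PM p) t - ?c" "char (PM q) t - ?c"] by simp
      also have "\<dots> \<le> \<bar>t\<bar> / 2 * BB (PM p) \<bar>t\<bar> + \<bar>t\<bar> / 2 * BB (PM q) \<bar>t\<bar>"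
        using P.char_bound[OF ip] Q.char_bound[OF iq] by (intro add_mono) simp_all
      also have "\<dots> = \<bar>t\<bar> * \<beta> \<bar>t\<bar>" by (simp add: \<beta>_def field_simps)
      finally show ?thesis .
    qed
    show "\<beta> r \<le> \<beta> r'" if "0 \<le> r" "r \<le> r'" for r r'
      using P.BB_mono[OF ip(1) that] Q.BB_mono[OF iq(1) that] by (simp add: \<beta>_def)
    show "0 \<le> \<beta> r" if "0 \<le> r" for r
      using P.BB_nonneg[OF that] Q.BB_nonneg[OF that] by (simp add: \<beta>_def)
    show "\<exists>r>0. \<beta> r \<le> e" if e: "e > 0" for e
    proof -
      have "(\<lambda>n. \<beta> (1 / Suc n)) \<longlonglongrightarrow> (0 + 0) / 2"
        unfolding \<beta>_def by (intro tendsto_divide tendsto_add P.BB_lim Q.BB_lim ip iq tendsto_const) simp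
      then have "(\<lambda>n. \<beta> (1 / Suc n)) \<longlonglongrightarrow> 0" by simp
      then have "eventually (\<lambda>n. \<beta> (1 / Suc n) < e) sequentially"
        using e by (rule order_tendstoD(2))
      then obtain N where "\<beta> (1 / Suc N) < e" by (auto simp: eventually_sequentially)
      then show ?thesis by (intro exI[of _ "1 / Suc N"]) simp
    qed
  qed
  have "PM p = PM q"
    by (rule Levy_uniqueness) (simp_all add: P.real_distribution_axioms Q.real_distribution_axioms chareq fun_eq_iff)
  then have "density lborel (\<lambda>x. ennreal (pp p x)) = density lborel (\<lambda>x. ennreal (pp q x))"
    by (simp add: PM_def)
  moreover have m1: "(\<lambda>x. ennreal (pp p x)) \<in> borel_measurable lborel"
    using measurable_compose[OF pp_meas[OF dp] measurable_ennreal] by simp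
  moreover have m2: "(\<lambda>x. ennreal (pp q x)) \<in> borel_measurable lborel"
    using measurable_compose[OF pp_meas[OF dq] measurable_ennreal] by simp
  ultimately have "AE x in lborel. ennreal (pp p x) = ennreal (pp q x)"
    by (intro sigma_finite_measure.density_unique[OF sigma_finite_lborel])
  then show ?thesis
  proof eventually_elim
    fix x assume "ennreal (pp p x) = ennreal (pp q x)"
    then have "pp p x = pp q x" using pp_nonneg[OF dp, of x] pp_nonneg[OF dq, of x] by simp
    then show "x \<ge> 0 \<longrightarrow> p x = p_eq w x" by (simp add: pp_def q_def indicator_def)
  qed
qed

theorem theorem1:
  fixes w :: real
  assumes "w > 0"
  shows "is_equilibrium (p_eq w) \<and> has_mean (p_eq w) w
    \<and> (\<forall>p. is_equilibrium p \<and> has_mean p w \<longrightarrow>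
           (AE x in lborel. x \<ge> 0 \<longrightarrow> p x = p_eq w x))"
  using p_eq_equilibrium[OF assms] p_eq_mean[OF assms] uniqueness[OF assms] by blast


end
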